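(* The Banach space $Y$ (the predual of $\mathcal{F}(\mathcal{M})$ described in the context) is not polyhedral, i.e. there is a finite-dimensional subspace of $Y$ whose unit ball is not a polytope.
   Context: For a pointed metric space $M$, ${\mathrm{Lip}}_0(M)$ is the space of real Lipschitz functions vanishing at the base point, normed by the Lipschitz constant $\|\cdot\|_L$. A function $f$ on a metric space is locally flat if $\lim_{x,y\to z}\frac{f(x)-f(y)}{d(x,y)}=0$ for every $z$. Let $p=(0,0)$, $q=(1,0)$, $S_n=\{(2^{-n}k,2^{-n}):k=0,\dots,2^n\}$ for $n\in\mathbb{N}$, and $\mathcal{M}=\{p,q\}\cup\bigcup_n S_n$ with the metric $d((x_1,y_1),(x_2,y_2))=|x_1-x_2|$ if $y_1=y_2$ and $=|y_1-y_2|+\min\{x_1+x_2,2-(x_1+x_2)\}$ if $y_1\neq y_2$, base point $p$. Let $V=\{(x,y)\in\mathcal{M}:x\in\{0,1\}\}$, $h(x,y)=x$, and $Y=\{f\in{\mathrm{Lip}}_0(\mathcal{M}):\lim_n\|(f-f(q)h)|_{S_n}\|_L=0,\ f|_V\text{ locally flat}\}$ with the Lipschitz norm. *)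

theory Defs
  imports "HOL-Analysis.Analysis" "HOL-Library.Function_Algebras"
begin

instantiation "fun" :: (type, real_vector) real_vector
begin
definition scaleR_fun :: "real \<Rightarrow> ('a \<Rightarrow> 'b) \<Rightarrow> 'a \<Rightarrow> 'b"
  where "scaleR_fun r f = (\<lambda>x. r *\<^sub>R f x)"
instance
  by standard (auto simp: scaleR_fun_def fun_eq_iff scaleR_add_right scaleR_add_left)
end

type_synonym pt = "real \<times> real"

definition pP :: pt where "pP = (0, 0)"
definition pQ :: pt where "pQ = (1, 0)"

definition Sn :: "nat \<Rightarrow> pt set" where
  "Sn n = {(real k / 2 ^ n, 1 / 2 ^ n) | k. k \<le> 2 ^ n}"

definition MM :: "pt set" where
  "MM = {pP, pQ} \<union> (\<Union>n\<in>{1..}. Sn n)"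

definition dM :: "pt \<Rightarrow> pt \<Rightarrow> real" where
  "dM a b = (if snd a = snd b then \<bar>fst a - fst b\<bar>
             else \<bar>snd a - snd b\<bar> + min (fst a + fst b) (2 - (fst a + fst b)))"

definition lipnorm :: "pt set \<Rightarrow> (pt \<Rightarrow> real) \<Rightarrow> real" where
  "lipnorm A f = Sup {\<bar>f x - f y\<bar> / dM x y | x y. x \<in> A \<and> y \<in> A \<and> x \<noteq> y}"

text \<open>Lip_0(M): Lipschitz functions on M vanishing at the base point p;
  represented canonically as functions that are 0 outside M.\<close>
definition Lip0 :: "(pt \<Rightarrow> real) set" where
  "Lip0 = {f. f pP = 0 \<and> (\<forall>x. x \<notin> MM \<longrightarrow> f x = 0) \<and>
              bdd_above {\<bar>f x - f y\<bar> / dM x y | x y. x \<in> MM \<and> y \<in> MM \<and> x \<noteq> y}}"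

definition VV :: "pt set" where
  "VV = {z \<in> MM. fst z = 0 \<or> fst z = 1}"

definition hh :: "pt \<Rightarrow> real" where "hh z = fst z"

definition locally_flat_on :: "pt set \<Rightarrow> (pt \<Rightarrow> real) \<Rightarrow> bool" where
  "locally_flat_on A f \<longleftrightarrow>
     (\<forall>z\<in>A. \<forall>e>0. \<exists>\<delta>>0. \<forall>x\<in>A. \<forall>y\<in>A.
        x \<noteq> y \<and> dM x z < \<delta> \<and> dM y z < \<delta> \<longrightarrow> \<bar>f x - f y\<bar> / dM x y \<le> e)"

definition YY :: "(pt \<Rightarrow> real) set" where
  "YY = {f \<in> Lip0. (\<lambda>n. lipnorm (Sn n) (\<lambda>z. f z - f pQ * hh z)) \<longlonglongrightarrow> 0
                 \<and> locally_flat_on VV f}"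

end

theory Submission
  imports Defs
begin

definition DD :: "real set" where "DD = insert 0 (range (\<lambda>n. 1 / 2 ^ Suc n))"

lemma MM_facts:
  assumes "z \<in> MM"
  shows "0 \<le> fst z \<and> fst z \<le> 1 \<and> snd z \<in> DD"
proof -
  consider "z = pP" | "z = pQ" | n where "n \<ge> 1" "z \<in> Sn n"
    using assms unfolding MM_def by auto
  then show ?thesis
  proof cases
    case 3
    then obtain k where k: "k \<le> (2::nat) ^ n" "z = (real k / 2 ^ n, 1 / 2 ^ n)"
      unfolding Sn_def by auto
    obtain n' where n': "n = Suc n'" using 3 by (cases n) auto
    have "real k \<le> 2 ^ n" using k(1)
      by (metis of_nat_le_iff of_nat_numeral of_nat_power)
    then have "real k / 2 ^ n \<le> 1" by simp
    moreover have "snd z \<in> DD" unfolding DD_def k(2) n' by auto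
    ultimately show ?thesis using k by auto
  qed (auto simp: pP_def pQ_def DD_def)
qed

lemma DD_bounds: assumes "y \<in> DD" shows "0 \<le> y \<and> y \<le> 1/2"
proof (cases "y = 0")
  case False
  then obtain n where n: "y = 1 / 2 ^ Suc n" using assms unfolding DD_def by auto
  have "(1::real) \<le> 2 ^ n" by (rule one_le_power) simp
  then show ?thesis unfolding n by simp
qed simp

lemma DD_sep:
  assumes "y \<in> DD" "y' \<in> DD" "y' < y"
  shows "y' \<le> y / 2"
proof (cases "y' = 0")
  case True then show ?thesis using DD_bounds[OF assms(1)] by simp
next
  case False
  then obtain m where m: "y' = 1 / 2 ^ Suc m" using assms(2) unfolding DD_def by auto
  have "y \<noteq> 0" using assms DD_bounds[OF assms(2)] by auto
  then obtain n where n: "y = 1 / 2 ^ Suc n" using assms(1) unfolding DD_def by auto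
  have "n < m"
  proof (rule ccontr)
    assume "\<not> n < m"
    then have "(2::real) ^ Suc m \<le> 2 ^ Suc n" by (intro power_increasing) auto
    then have "y \<le> y'" unfolding m n by (simp add: field_simps)
    then show False using assms by simp
  qed
  then have "(2::real) ^ Suc (Suc n) \<le> 2 ^ Suc m" by (intro power_increasing) auto
  then show ?thesis unfolding m n by (simp add: field_simps)
qed

lemma aux_lin: "(b::real) \<le> a \<Longrightarrow> a \<le> y/8 \<Longrightarrow> y' \<le> y/2 \<Longrightarrow> a + b \<le> (y - y')/2"
  by (simp add: field_simps)

lemma DD_gap:
  assumes "y \<in> DD" "y' \<in> DD" "y \<noteq> y'"
  shows "max y y' / 2 \<le> \<bar>y - y'\<bar>" and "y^4 + y'^4 \<le> \<bar>y - y'\<bar> / 2"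
proof -
  have b: "0 \<le> y" "y \<le> 1/2" "0 \<le> y'" "y' \<le> 1/2" using DD_bounds assms by auto
  have p4: "t^4 \<le> t / 8" if "0 \<le> t" "t \<le> 1/2" for t :: real
  proof -
    have "t^3 \<le> (1/2)^3" using that by (intro power_mono) auto
    then have "t^3 \<le> 1/8" by (simp add: power_divide)
    then have "t * t^3 \<le> t * (1/8)" using that by (intro mult_left_mono) auto
    moreover have "t^4 = t * t^3" by (simp add: power_numeral_reduce)
    ultimately show ?thesis by simp
  qed
  have "max y y' / 2 \<le> \<bar>y - y'\<bar> \<and> y^4 + y'^4 \<le> \<bar>y - y'\<bar> / 2"
  proof (cases "y' < y")
    case True
    have s: "y' \<le> y/2" using DD_sep assms True by auto
    note T' = True
    have "y'^4 \<le> y^4" using b s by (intro power_mono) auto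
    moreover have "y^4 \<le> y/8" using p4[of y] b by simp
    moreover have "\<bar>y - y'\<bar> = y - y'" using True by simp
    moreover have "max y y' = y" using True by simp
    ultimately have c1: "y^4 + y'^4 \<le> \<bar>y - y'\<bar> / 2" using s aux_lin[of "y'^4" "y^4" y y'] by simp
    have c2: "max y y' / 2 \<le> \<bar>y - y'\<bar>" using s T' by auto
    show ?thesis using c1 c2 by blast
  next
    case False
    then have T: "y < y'" using assms by auto
    have s: "y \<le> y'/2" using DD_sep assms T by auto
    note T' = T
    have "y^4 \<le> y'^4" using b s by (intro power_mono) auto
    moreover have "y'^4 \<le> y'/8" using p4[of y'] b by simp
    moreover have "\<bar>y - y'\<bar> = y' - y" using T by simp
    moreover have "max y y' = y'" using T by simp
    ultimately have c1: "y^4 + y'^4 \<le> \<bar>y - y'\<bar> / 2" using s aux_lin[of "y^4" "y'^4" y' y] by (simp add: add.commute)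
    have c2: "max y y' / 2 \<le> \<bar>y - y'\<bar>" using s T' by auto
    show ?thesis using c1 c2 by blast
  qed
  then show "max y y' / 2 \<le> \<bar>y - y'\<bar>" "y^4 + y'^4 \<le> \<bar>y - y'\<bar> / 2" by auto
qed

definition FF :: "pt \<Rightarrow> real" where "FF z = (if z \<in> MM then (1 - snd z ^ 8) * fst z else 0)"
definition GG :: "pt \<Rightarrow> real" where "GG z = (if z \<in> MM then snd z ^ 4 * fst z else 0)"
definition ee :: "real \<Rightarrow> real \<Rightarrow> real \<Rightarrow> real" where "ee a b y = b * y^4 - a * y^8"

lemma comb_apply:
  "(a *\<^sub>R FF + b *\<^sub>R GG) z = (if z \<in> MM then (a + ee a b (snd z)) * fst z else 0)"
  by (simp add: scaleR_fun_def FF_def GG_def ee_def algebra_simps)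

lemma ee_bound: assumes "y \<in> DD" shows "\<bar>ee a b y\<bar> \<le> (\<bar>a\<bar> + \<bar>b\<bar>) * y^4"
proof -
  have y: "0 \<le> y" "y \<le> 1" using DD_bounds[OF assms] by auto
  have "y^8 \<le> y^4" using y by (intro power_decreasing) auto
  have "\<bar>b * y^4 - a * y^8\<bar> \<le> \<bar>b * y^4\<bar> + \<bar>a * y^8\<bar>" by (rule abs_triangle_ineq4)
  then have "\<bar>ee a b y\<bar> \<le> \<bar>b\<bar> * y^4 + \<bar>a\<bar> * y^8"
    unfolding ee_def using y by (simp add: abs_mult)
  also have "\<dots> \<le> \<bar>b\<bar> * y^4 + \<bar>a\<bar> * y^4"
    using \<open>y^8 \<le> y^4\<close> by (simp add: mult_left_mono)
  finally show ?thesis by (simp add: algebra_simps)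
qed

lemma slope_same:
  assumes "z \<in> MM" "w \<in> MM" "z \<noteq> w" "snd z = snd w"
  shows "\<bar>(c + e (snd z)) * fst z - (c + e (snd w)) * fst w\<bar> / dM z w = \<bar>c + e (snd z)\<bar>"
proof -
  have "fst z \<noteq> fst w" using assms(3,4) by (metis prod_eqI)
  then have d: "dM z w = \<bar>fst z - fst w\<bar>" "\<bar>fst z - fst w\<bar> > 0" using assms(4) unfolding dM_def by auto
  have "(c + e (snd z)) * fst z - (c + e (snd w)) * fst w = (c + e (snd z)) * (fst z - fst w)"
    using assms(4) by (simp add: algebra_simps)
  then show ?thesis using d by (simp add: abs_mult)
qed

lemma frac_le_max: "(0::real) \<le> m \<Longrightarrow> 0 < d \<Longrightarrow> n \<le> A * m + B * d \<Longrightarrow> n / (d + m) \<le> max A B"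
proof -
  assume h: "0 \<le> m" "0 < d" "n \<le> A * m + B * d"
  have 1: "A * m \<le> max A B * m" using h by (intro mult_right_mono) auto
  have 2: "B * d \<le> max A B * d" using h by (intro mult_right_mono) auto
  have "n \<le> max A B * m + max A B * d" using 1 2 h by linarith
  then have "n \<le> max A B * (d + m)" by (simp add: algebra_simps)
  then show ?thesis using h by (simp add: divide_le_eq algebra_simps)
qed

lemma slope_diff:
  assumes "z \<in> MM" "w \<in> MM" "snd z \<noteq> snd w" "0 \<le> E"
    and e: "\<And>y. y \<in> DD \<Longrightarrow> \<bar>e y\<bar> \<le> E * y^4"
  shows "\<bar>(c + e (snd z)) * fst z - (c + e (snd w)) * fst w\<bar> / dM z w \<le> max \<bar>c\<bar> (E/2)"
proof -
  define x where "x = fst z"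
  define x' where "x' = fst w"
  define y where "y = snd z"
  define y' where "y' = snd w"
  have xb: "0 \<le> x" "x \<le> 1" "0 \<le> x'" "x' \<le> 1" and yD: "y \<in> DD" "y' \<in> DD"
    using MM_facts[OF assms(1)] MM_facts[OF assms(2)] unfolding x_def x'_def y_def y'_def by auto
  have yne: "y \<noteq> y'" using assms(3) unfolding y_def y'_def .
  define m where "m = min (x + x') (2 - (x + x'))"
  define d where "d = \<bar>y - y'\<bar>"
  have dM: "dM z w = d + m" unfolding dM_def m_def d_def x_def x'_def y_def y'_def using assms(3) by simp
  have m0: "0 \<le> m" "\<bar>x - x'\<bar> \<le> m" unfolding m_def using xb by auto
  have d0: "0 < d" unfolding d_def using yne by simp
  have gap: "y^4 + y'^4 \<le> d / 2" unfolding d_def using DD_gap(2)[OF yD yne] .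
  have "\<bar>(c + e y) * x - (c + e y') * x'\<bar> = \<bar>c * (x - x') + e y * x - e y' * x'\<bar>"
    by (simp add: algebra_simps)
  also have "\<dots> \<le> \<bar>c\<bar> * \<bar>x - x'\<bar> + \<bar>e y\<bar> * x + \<bar>e y'\<bar> * x'"
  proof -
    have "\<bar>c * (x - x') + e y * x - e y' * x'\<bar> \<le> \<bar>c * (x - x')\<bar> + \<bar>e y * x\<bar> + \<bar>e y' * x'\<bar>"
      by linarith
    then show ?thesis using xb by (simp add: abs_mult)
  qed
  also have "\<dots> \<le> \<bar>c\<bar> * m + E * y^4 + E * y'^4"
  proof -
    have "\<bar>c\<bar> * \<bar>x - x'\<bar> \<le> \<bar>c\<bar> * m" using m0 by (simp add: mult_left_mono)
    moreover have "\<bar>e y\<bar> * x \<le> E * y^4"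
    proof -
      have "\<bar>e y\<bar> * x \<le> \<bar>e y\<bar> * 1" using xb by (intro mult_left_mono) auto
      then show ?thesis using e[OF yD(1)] by simp
    qed
    moreover have "\<bar>e y'\<bar> * x' \<le> E * y'^4"
    proof -
      have "\<bar>e y'\<bar> * x' \<le> \<bar>e y'\<bar> * 1" using xb by (intro mult_left_mono) auto
      then show ?thesis using e[OF yD(2)] by simp
    qed
    ultimately show ?thesis by linarith
  qed
  also have "\<dots> \<le> \<bar>c\<bar> * m + (E/2) * d"
  proof -
    have "E * (y^4 + y'^4) \<le> E * (d/2)" using gap assms(4) by (intro mult_left_mono)
    then show ?thesis by (simp add: algebra_simps)
  qed
  finally have "\<bar>(c + e y) * x - (c + e y') * x'\<bar> \<le> \<bar>c\<bar> * m + (E/2) * d" .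
  from frac_le_max[OF m0(1) d0 this] show ?thesis
    unfolding dM x_def x'_def y_def y'_def .
qed

lemma Sn_MM: "n \<ge> 1 \<Longrightarrow> Sn n \<subseteq> MM"
  unfolding MM_def by auto

lemma pts_Sn: "(0, 1 / 2 ^ n) \<in> Sn n" "(1, 1 / 2 ^ n) \<in> Sn n"
proof -
  show "(0, 1 / 2 ^ n) \<in> Sn n" unfolding Sn_def by (rule CollectI, rule exI[of _ 0]) simp
  show "(1, 1 / 2 ^ n) \<in> Sn n" unfolding Sn_def
    by (rule CollectI, rule exI[of _ "2^n"]) simp
qed

lemma pts_MM: "pP \<in> MM" "pQ \<in> MM" "(0, 1 / 2 ^ Suc n) \<in> MM" "(1, 1 / 2 ^ Suc n) \<in> MM"
  using pts_Sn[of "Suc n"] Sn_MM[of "Suc n"] unfolding MM_def by auto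

lemma pP_ne_pQ: "pP \<noteq> pQ" unfolding pP_def pQ_def by simp

lemma lip_le:
  assumes "\<And>x y. x \<in> MM \<Longrightarrow> y \<in> MM \<Longrightarrow> x \<noteq> y \<Longrightarrow> \<bar>f x - f y\<bar> / dM x y \<le> M"
  shows "lipnorm MM f \<le> M"
  unfolding lipnorm_def
  apply (rule cSup_least)
  using pts_MM(1,2) pP_ne_pQ apply blast
  using assms by blast

lemma lip_ge:
  assumes "f \<in> Lip0" "x \<in> MM" "y \<in> MM" "x \<noteq> y"
  shows "\<bar>f x - f y\<bar> / dM x y \<le> lipnorm MM f"
  unfolding lipnorm_def
  apply (rule cSup_upper)
  using assms(2-4) apply blast
  using assms(1) unfolding Lip0_def by auto

lemma comb_slope:
  assumes "x \<in> MM" "y \<in> MM" "x \<noteq> y"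
  shows "\<bar>(a *\<^sub>R FF + b *\<^sub>R GG) x - (a *\<^sub>R FF + b *\<^sub>R GG) y\<bar> / dM x y \<le> \<bar>a\<bar> + (\<bar>a\<bar> + \<bar>b\<bar>)"
proof -
  let ?E = "\<bar>a\<bar> + \<bar>b\<bar>"
  have eq: "\<bar>(a *\<^sub>R FF + b *\<^sub>R GG) x - (a *\<^sub>R FF + b *\<^sub>R GG) y\<bar> / dM x y
      = \<bar>(a + ee a b (snd x)) * fst x - (a + ee a b (snd y)) * fst y\<bar> / dM x y"
    unfolding comb_apply using assms by simp
  show ?thesis
  proof (cases "snd x = snd y")
    case True
    have "\<bar>a + ee a b (snd x)\<bar> \<le> \<bar>a\<bar> + \<bar>ee a b (snd x)\<bar>" by (rule abs_triangle_ineq)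
    moreover have "\<bar>ee a b (snd x)\<bar> \<le> ?E * snd x ^ 4" using ee_bound MM_facts[OF assms(1)] by blast
    moreover have "snd x ^ 4 \<le> 1"
    proof -
      have "0 \<le> snd x \<and> snd x \<le> 1/2" using DD_bounds MM_facts[OF assms(1)] by blast
      then have "0 \<le> snd x" "snd x \<le> 1" by auto
      then show ?thesis by (rule power_le_one)
    qed
    moreover then have "?E * snd x ^ 4 \<le> ?E" by (simp add: mult_left_le)
    ultimately show ?thesis unfolding eq slope_same[OF assms True] by linarith
  next
    case False
    have "\<bar>(a + ee a b (snd x)) * fst x - (a + ee a b (snd y)) * fst y\<bar> / dM x y \<le> max \<bar>a\<bar> (?E/2)"
      by (rule slope_diff[OF assms(1,2) False]) (auto intro: ee_bound)
    moreover have "max \<bar>a\<bar> ((\<bar>a\<bar> + \<bar>b\<bar>)/2) \<le> \<bar>a\<bar> + (\<bar>a\<bar> + \<bar>b\<bar>)" by simp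
    ultimately show ?thesis unfolding eq by linarith
  qed
qed

lemma comb_Lip0: "a *\<^sub>R FF + b *\<^sub>R GG \<in> Lip0"
  unfolding Lip0_def
proof (intro CollectI conjI allI impI)
  show "(a *\<^sub>R FF + b *\<^sub>R GG) pP = 0" unfolding comb_apply using pts_MM(1) by (simp add: pP_def)
  show "(a *\<^sub>R FF + b *\<^sub>R GG) x = 0" if "x \<notin> MM" for x using that unfolding comb_apply by simp
  show "bdd_above {\<bar>(a *\<^sub>R FF + b *\<^sub>R GG) x - (a *\<^sub>R FF + b *\<^sub>R GG) y\<bar> / dM x y |x y. x \<in> MM \<and> y \<in> MM \<and> x \<noteq> y}"
    apply (rule bdd_aboveI[where M="\<bar>a\<bar> + (\<bar>a\<bar> + \<bar>b\<bar>)"])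
    using comb_slope by blast
qed

lemma main_slope:
  assumes "x \<in> MM" "y \<in> MM" "x \<noteq> y" "0 \<le> t" "t \<le> 1"
  shows "\<bar>(1 *\<^sub>R FF + t *\<^sub>R GG) x - (1 *\<^sub>R FF + t *\<^sub>R GG) y\<bar> / dM x y \<le> 1 + t^2/4"
proof -
  have eq: "\<bar>(1 *\<^sub>R FF + t *\<^sub>R GG) x - (1 *\<^sub>R FF + t *\<^sub>R GG) y\<bar> / dM x y
      = \<bar>(1 + ee 1 t (snd x)) * fst x - (1 + ee 1 t (snd y)) * fst y\<bar> / dM x y"
    unfolding comb_apply using assms by simp
  show ?thesis
  proof (cases "snd x = snd y")
    case True
    define u where "u = snd x"
    have u: "0 \<le> u" "u \<le> 1/2" using DD_bounds MM_facts[OF assms(1)] unfolding u_def by auto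
    have u8: "u^8 \<le> 1" using u by (simp add: power_le_one)
    have "0 \<le> (u^4 - t/2)^2" by simp
    then have q: "t * u^4 - u^8 \<le> t^2/4" by (simp add: power2_eq_square power_mult_distrib algebra_simps
          flip: power_add)
    have "0 \<le> t * u^4" using assms u by simp
    then have "1 + ee 1 t u \<ge> 0" unfolding ee_def using u8 by simp
    then have "\<bar>1 + ee 1 t u\<bar> \<le> 1 + t^2/4" using q unfolding ee_def by simp
    then show ?thesis unfolding eq slope_same[OF assms(1-3) True] u_def .
  next
    case False
    have "\<bar>(1 + ee 1 t (snd x)) * fst x - (1 + ee 1 t (snd y)) * fst y\<bar> / dM x y \<le> max \<bar>1\<bar> ((\<bar>1\<bar> + \<bar>t\<bar>)/2)"
      apply (rule slope_diff[OF assms(1,2) False])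
      using ee_bound[of _ 1 t] by auto
    moreover have "max \<bar>1::real\<bar> ((\<bar>1\<bar> + \<bar>t\<bar>)/2) = 1" using assms by auto
    moreover have "(1::real) \<le> 1 + t^2/4" by simp
    ultimately show ?thesis unfolding eq by linarith
  qed
qed

lemma main_lower:
  assumes "0 < s"
  shows "1 < lipnorm MM (1 *\<^sub>R FF + s *\<^sub>R GG)"
proof -
  obtain n where n: "(1/2::real) ^ n < s" using real_arch_pow_inv[of s "1/2"] assms by auto
  define u :: real where "u = 1 / 2 ^ Suc n"
  have "(1::real) \<le> 2 ^ Suc n" by (rule one_le_power) simp
  then have u: "0 < u" "u \<le> 1" unfolding u_def by auto
  have "u \<le> (1/2)^n" unfolding u_def by (simp add: power_divide field_simps)
  then have "u < s" using n by simp
  moreover have "u^4 \<le> u" using u by (simp add: power_le_one_iff power_decreasing[of 1 4 u, simplified])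
  ultimately have us: "u^4 < s" by simp
  have u4: "0 < u^4" using u by simp
  have "u^8 = u^4 * u^4" by (simp flip: power_add)
  also have "\<dots> < s * u^4" using us u4 by (intro mult_strict_right_mono) auto
  finally have key: "1 < 1 + ee 1 s u" unfolding ee_def by (simp add: algebra_simps)
  let ?x = "(1::real, u)" and ?y = "(0::real, u)"
  have xy: "?x \<in> MM" "?y \<in> MM" "?x \<noteq> ?y" using pts_MM(3,4)[of n] unfolding u_def by auto
  have "\<bar>(1 *\<^sub>R FF + s *\<^sub>R GG) ?x - (1 *\<^sub>R FF + s *\<^sub>R GG) ?y\<bar> / dM ?x ?y = \<bar>1 + ee 1 s u\<bar>"
    unfolding comb_apply using xy by (simp add: dM_def)
  then have "1 < \<bar>(1 *\<^sub>R FF + s *\<^sub>R GG) ?x - (1 *\<^sub>R FF + s *\<^sub>R GG) ?y\<bar> / dM ?x ?y"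
    using key by simp
  also have "\<dots> \<le> lipnorm MM (1 *\<^sub>R FF + s *\<^sub>R GG)"
    by (rule lip_ge[OF comb_Lip0 xy])
  finally show ?thesis .
qed

lemma comb_pQ: "(a *\<^sub>R FF + b *\<^sub>R GG) pQ = a"
  unfolding comb_apply using pts_MM(2) by (simp add: pQ_def ee_def)

lemma Sn_snd: "z \<in> Sn n \<Longrightarrow> snd z = 1 / 2 ^ n"
  unfolding Sn_def by auto

lemma comb_Sn_lip:
  assumes "n \<ge> 1"
  shows "lipnorm (Sn n) (\<lambda>z. (a *\<^sub>R FF + b *\<^sub>R GG) z - (a *\<^sub>R FF + b *\<^sub>R GG) pQ * hh z)
         = \<bar>ee a b (1 / 2 ^ n)\<bar>"
proof -
  let ?f = "a *\<^sub>R FF + b *\<^sub>R GG"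
  let ?g = "\<lambda>z. ?f z - ?f pQ * hh z"
  let ?c = "\<bar>ee a b (1 / 2 ^ n)\<bar>"
  have g: "?g z = ee a b (1 / 2 ^ n) * fst z" if "z \<in> Sn n" for z
  proof -
    have "z \<in> MM" using that Sn_MM assms by blast
    then show ?thesis unfolding comb_pQ unfolding hh_def comb_apply Sn_snd[OF that] by (simp add: algebra_simps)
  qed
  have "{\<bar>?g x - ?g y\<bar> / dM x y | x y. x \<in> Sn n \<and> y \<in> Sn n \<and> x \<noteq> y} = {?c}"
  proof (rule set_eqI, rule iffI)
    fix v assume "v \<in> {\<bar>?g x - ?g y\<bar> / dM x y | x y. x \<in> Sn n \<and> y \<in> Sn n \<and> x \<noteq> y}"
    then obtain x y where xy: "x \<in> Sn n" "y \<in> Sn n" "x \<noteq> y" "v = \<bar>?g x - ?g y\<bar> / dM x y" by blast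
    have s: "snd x = snd y" using Sn_snd xy by simp
    then have "fst x \<noteq> fst y" using xy(3) by (metis prod_eqI)
    then have d: "dM x y = \<bar>fst x - fst y\<bar>" "\<bar>fst x - fst y\<bar> > 0" using s unfolding dM_def by auto
    have "?g x - ?g y = ee a b (1 / 2 ^ n) * (fst x - fst y)" using g xy by (simp add: algebra_simps)
    then show "v \<in> {?c}" using xy(4) d by (simp add: abs_mult)
  next
    fix v assume "v \<in> {?c}"
    then have v: "v = ?c" by simp
    let ?x = "(1::real, 1 / 2 ^ n)" and ?y = "(0::real, 1 / 2 ^ n)"
    have "\<bar>?g ?x - ?g ?y\<bar> / dM ?x ?y = ?c" using g pts_Sn by (simp add: dM_def)
    then show "v \<in> {\<bar>?g x - ?g y\<bar> / dM x y | x y. x \<in> Sn n \<and> y \<in> Sn n \<and> x \<noteq> y}"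
      using pts_Sn v by force
  qed
  then show ?thesis unfolding lipnorm_def by simp
qed

lemma comb_tendsto:
  "(\<lambda>n. lipnorm (Sn n) (\<lambda>z. (a *\<^sub>R FF + b *\<^sub>R GG) z - (a *\<^sub>R FF + b *\<^sub>R GG) pQ * hh z)) \<longlonglongrightarrow> 0"
proof -
  have h: "(\<lambda>n. (1/2::real) ^ n) \<longlonglongrightarrow> 0" by (rule LIMSEQ_realpow_zero) auto
  have "(\<lambda>n. b * ((1/2::real) ^ n)^4 - a * ((1/2) ^ n)^8) \<longlonglongrightarrow> b * 0^4 - a * 0^8"
    by (intro tendsto_intros h)
  then have "(\<lambda>n. \<bar>ee a b (1 / 2 ^ n)\<bar>) \<longlonglongrightarrow> \<bar>0\<bar>"
    unfolding ee_def by (intro tendsto_rabs) (simp add: power_divide)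
  then have "(\<lambda>n. \<bar>ee a b (1 / 2 ^ n)\<bar>) \<longlonglongrightarrow> 0" by simp
  moreover have "eventually (\<lambda>n. \<bar>ee a b (1 / 2 ^ n)\<bar> =
      lipnorm (Sn n) (\<lambda>z. (a *\<^sub>R FF + b *\<^sub>R GG) z - (a *\<^sub>R FF + b *\<^sub>R GG) pQ * hh z)) sequentially"
    unfolding eventually_sequentially using comb_Sn_lip by (metis order.refl)
  ultimately show ?thesis by (rule Lim_transform_eventually)
qed

lemma VV_facts: "z \<in> VV \<Longrightarrow> z \<in> MM \<and> (fst z = 0 \<or> fst z = 1)"
  unfolding VV_def by auto

lemma VV_far:
  assumes "x \<in> VV" "z \<in> VV" "fst x \<noteq> fst z"
  shows "1 \<le> dM x z"
proof -
  have s: "fst x + fst z = 1" "\<bar>fst x - fst z\<bar> = 1" using VV_facts[OF assms(1)] VV_facts[OF assms(2)] assms(3) by auto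
  show ?thesis unfolding dM_def using s by auto
qed

lemma comb_flat: "locally_flat_on VV (a *\<^sub>R FF + b *\<^sub>R GG)"
  unfolding locally_flat_on_def
proof (intro ballI allI impI)
  let ?f = "a *\<^sub>R FF + b *\<^sub>R GG"
  fix z :: pt and e :: real
  assume z: "z \<in> VV" and e: "0 < e"
  have fV: "?f x = (a + ee a b (snd x)) * fst x" if "x \<in> VV" for x
    using VV_facts[OF that] unfolding comb_apply by simp
  show "\<exists>\<delta>>0. \<forall>x\<in>VV. \<forall>y\<in>VV. x \<noteq> y \<and> dM x z < \<delta> \<and> dM y z < \<delta> \<longrightarrow> \<bar>?f x - ?f y\<bar> / dM x y \<le> e"
  proof (cases "fst z = 0")
    case True
    show ?thesis
    proof (rule exI[of _ 1], intro conjI ballI impI)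
      fix x y assume xy: "x \<in> VV" "y \<in> VV" "x \<noteq> y \<and> dM x z < 1 \<and> dM y z < 1"
      have "fst x = fst z" using VV_far[OF xy(1) z] xy(3) by force
      moreover have "fst y = fst z" using VV_far[OF xy(2) z] xy(3) by force
      ultimately show "\<bar>?f x - ?f y\<bar> / dM x y \<le> e" using fV xy True e by simp
    qed simp
  next
    case False
    then have z1: "fst z = 1" using VV_facts[OF z] by auto
    have zD: "snd z \<in> DD" using VV_facts[OF z] MM_facts by blast
    have sx: "fst x = 1" if "x \<in> VV" "dM x z < 1" for x
      using VV_far[OF that(1) z] that(2) z1 by force
    have dM11: "dM x y = \<bar>snd x - snd y\<bar>" if "fst x = 1" "fst y = 1" for x y :: pt
      unfolding dM_def using that by auto
    show ?thesis
    proof (cases "snd z = 0")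
      case False
      have zb: "0 < snd z" "snd z \<le> 1/2" using DD_bounds[OF zD] False by auto
      have eqz: "x = z" if "x \<in> VV" "dM x z < snd z / 2" for x
      proof -
        have x1: "fst x = 1" using sx[OF that(1)] that(2) zb by simp
        have xD: "snd x \<in> DD" using VV_facts[OF that(1)] MM_facts by blast
        have "snd x = snd z"
        proof (rule ccontr)
          assume ne: "snd x \<noteq> snd z"
          have "max (snd x) (snd z) / 2 \<le> \<bar>snd x - snd z\<bar>" by (rule DD_gap(1)[OF xD zD ne])
          then have "snd z / 2 \<le> dM x z" using dM11[OF x1 z1] by simp
          then show False using that(2) by simp
        qed
        then show ?thesis using x1 z1 by (simp add: prod_eq_iff)
      qed
      show ?thesis
        by (rule exI[of _ "snd z / 2"]) (use zb eqz in auto)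
    next
      case True
      define E where "E = \<bar>a\<bar> + \<bar>b\<bar>"
      have E0: "0 \<le> E" unfolding E_def by simp
      define \<delta> where "\<delta> = min 1 (e / (4 * E + 1))"
      have pos: "0 < 4 * E + 1" using E0 by simp
      have d1: "0 < \<delta>" "\<delta> \<le> 1" unfolding \<delta>_def using e pos by auto
      have "\<delta> \<le> e / (4 * E + 1)" unfolding \<delta>_def by simp
      then have d3: "(4 * E + 1) * \<delta> \<le> e" using pos by (simp add: le_divide_eq mult.commute)
      note \<delta> = d1 d3
      have near: "fst x = 1 \<and> snd x < \<delta> \<and> 0 \<le> snd x \<and> snd x \<in> DD" if "x \<in> VV" "dM x z < \<delta>" for x
      proof -
        have x1: "fst x = 1" using sx[OF that(1)] that(2) \<delta> by simp
        have xD: "snd x \<in> DD" using VV_facts[OF that(1)] MM_facts by blast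
        have "dM x z = \<bar>snd x\<bar>" using dM11[OF x1 z1] True by simp
        then show ?thesis using x1 xD DD_bounds[OF xD] that(2) by auto
      qed
      show ?thesis
      proof (rule exI[of _ \<delta>], intro conjI ballI impI)
        show "0 < \<delta>" by (rule \<delta>(1))
        fix x y assume xy: "x \<in> VV" "y \<in> VV" "x \<noteq> y \<and> dM x z < \<delta> \<and> dM y z < \<delta>"
        have nx: "fst x = 1" "snd x < \<delta>" "0 \<le> snd x" "snd x \<in> DD" using near xy by auto
        have ny: "fst y = 1" "snd y < \<delta>" "0 \<le> snd y" "snd y \<in> DD" using near xy by auto
        have ne: "snd x \<noteq> snd y" using xy(3) nx(1) ny(1) by (metis prod_eqI)
        define M where "M = max (snd x) (snd y)"
        have M: "0 \<le> M" "M < \<delta>" "M \<le> 1" unfolding M_def using nx ny \<delta> by auto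
        have gap: "M / 2 \<le> \<bar>snd x - snd y\<bar>" unfolding M_def by (rule DD_gap(1)[OF nx(4) ny(4) ne])
        have p4: "u^4 \<le> M^2" if "0 \<le> u" "u \<le> M" for u
        proof -
          have "u^4 \<le> M^4" using that by (intro power_mono) auto
          also have "M^4 \<le> M^2" using M by (intro power_decreasing) auto
          finally show ?thesis .
        qed
        have ex: "\<bar>ee a b (snd x)\<bar> \<le> E * M^2"
        proof -
          have "\<bar>ee a b (snd x)\<bar> \<le> E * snd x ^ 4" unfolding E_def by (rule ee_bound[OF nx(4)])
          also have "\<dots> \<le> E * M^2" using p4[of "snd x"] nx E0 unfolding M_def by (intro mult_left_mono) auto
          finally show ?thesis .
        qed
        have ey: "\<bar>ee a b (snd y)\<bar> \<le> E * M^2"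
        proof -
          have "\<bar>ee a b (snd y)\<bar> \<le> E * snd y ^ 4" unfolding E_def by (rule ee_bound[OF ny(4)])
          also have "\<dots> \<le> E * M^2" using p4[of "snd y"] ny E0 unfolding M_def by (intro mult_left_mono) auto
          finally show ?thesis .
        qed
        have num: "\<bar>?f x - ?f y\<bar> \<le> 2 * E * M^2"
        proof -
          have "?f x - ?f y = ee a b (snd x) - ee a b (snd y)" using fV xy nx ny by simp
          then show ?thesis using ex ey by linarith
        qed
        have "4 * E * M \<le> e"
        proof -
          have "(4 * E + 1) * M \<le> (4 * E + 1) * \<delta>" using M E0 by (intro mult_left_mono) auto
          moreover have "4 * E * M \<le> (4 * E + 1) * M" using M by (simp add: algebra_simps)
          ultimately show ?thesis using \<delta>(3) by linarith
        qed
        then have "(4 * E * M) * M \<le> e * M" using M by (intro mult_right_mono) auto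
        then have "2 * E * M^2 \<le> e * (M / 2)" by (simp add: power2_eq_square algebra_simps)
        also have "\<dots> \<le> e * \<bar>snd x - snd y\<bar>" using gap e by (intro mult_left_mono) auto
        finally have "\<bar>?f x - ?f y\<bar> \<le> e * dM x y" using num dM11[OF nx(1) ny(1)] by simp
        moreover have "0 < dM x y" using dM11[OF nx(1) ny(1)] ne by simp
        ultimately show "\<bar>?f x - ?f y\<bar> / dM x y \<le> e" by (simp add: divide_le_eq)
      qed
    qed
  qed
qed

lemma comb_YY: "a *\<^sub>R FF + b *\<^sub>R GG \<in> YY"
  unfolding YY_def using comb_Lip0 comb_tendsto comb_flat by blast

definition LL :: "real \<times> real \<Rightarrow> pt \<Rightarrow> real" where "LL v = fst v *\<^sub>R FF + snd v *\<^sub>R GG"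

lemma LL_Pair: "LL (a, b) = a *\<^sub>R FF + b *\<^sub>R GG"
  unfolding LL_def fst_conv snd_conv ..

lemma span_FG: "span {FF, GG} = range LL"
proof (rule set_eqI, rule iffI)
  fix x assume "x \<in> span {FF, GG}"
  then obtain k where "x - k *\<^sub>R FF \<in> span {GG}" using span_breakdown_eq by blast
  then obtain l where "x - k *\<^sub>R FF = l *\<^sub>R GG" unfolding span_singleton by auto
  then have "x = LL (k, l)" unfolding LL_Pair by (simp add: algebra_simps)
  then show "x \<in> range LL" by blast
next
  fix x assume "x \<in> range LL"
  then obtain k l where x: "x = k *\<^sub>R FF + l *\<^sub>R GG" unfolding LL_def by auto
  have "x - k *\<^sub>R FF = l *\<^sub>R GG" unfolding x by simp
  moreover have "l *\<^sub>R GG \<in> span {GG}" by (simp add: span_mul span_base)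
  ultimately have "x - k *\<^sub>R FF \<in> span {GG}" by simp
  then show "x \<in> span {FF, GG}" using span_breakdown_eq by blast
qed

lemma LL_linear: "linear LL"
  unfolding LL_def by (rule linearI) (simp_all add: algebra_simps scaleR_add_right)

lemma LL_inj: "inj LL"
proof (rule injI)
  fix u v assume h: "LL u = LL v"
  obtain a b where u: "u = (a, b)" by (cases u)
  obtain c d where v: "v = (c, d)" by (cases v)
  have "LL u pQ = LL v pQ" using h by simp
  then have ac: "a = c" unfolding u v LL_Pair comb_pQ .
  have "LL u (1, 1 / 2 ^ Suc 0) = LL v (1, 1 / 2 ^ Suc 0)" using h by simp
  then have "(a + ee a b (1/2)) = (c + ee c d (1/2))"
    unfolding u v LL_Pair comb_apply using pts_MM(4)[of 0] by simp
  then have "b = d" using ac unfolding ee_def by (simp add: power_divide)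
  then show "u = v" using ac u v by simp
qed

lemma scale_comb: "(c * a) *\<^sub>R FF + (c * b) *\<^sub>R GG = c *\<^sub>R (a *\<^sub>R FF + b *\<^sub>R GG)"
  by (simp add: scaleR_add_right)

lemma scaleR_fun_apply: "(c *\<^sub>R (g::pt \<Rightarrow> real)) z = c * g z"
  by (simp add: scaleR_fun_def)

lemma aux_scale: "0 < (m::real) \<Longrightarrow> \<bar>(1/m) * A - (1/m) * B\<bar> / d = (1/m) * (\<bar>A - B\<bar> / d)"
proof -
  assume m: "0 < m"
  have "(1/m) * A - (1/m) * B = (1/m) * (A - B)" by (simp add: right_diff_distrib)
  then have "\<bar>(1/m) * A - (1/m) * B\<bar> = (1/m) * \<bar>A - B\<bar>" using m by (simp add: abs_mult)
  then show ?thesis by simp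
qed

lemma K2_10: "lipnorm MM (LL (1, 0)) \<le> 1"
  unfolding LL_Pair
  apply (rule lip_le)
  using main_slope[of _ _ 0] by simp

lemma K2_t:
  assumes "0 < t" "t \<le> 1"
  shows "lipnorm MM (LL (1 / (1 + t^2/4), t / (1 + t^2/4))) \<le> 1"
proof -
  define m where "m = 1 + t^2/4"
  have m: "0 < m" unfolding m_def by (simp add: add_pos_nonneg)
  have eq: "LL (1 / m, t / m) = (1/m) *\<^sub>R (1 *\<^sub>R FF + t *\<^sub>R GG)"
    unfolding LL_Pair scale_comb[symmetric] by simp
  show ?thesis unfolding m_def[symmetric] eq
  proof (rule lip_le)
    fix x y assume xy: "x \<in> MM" "y \<in> MM" "x \<noteq> y"
    have "\<bar>((1/m) *\<^sub>R (1 *\<^sub>R FF + t *\<^sub>R GG)) x - ((1/m) *\<^sub>R (1 *\<^sub>R FF + t *\<^sub>R GG)) y\<bar> / dM x y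
        = (1/m) * (\<bar>(1 *\<^sub>R FF + t *\<^sub>R GG) x - (1 *\<^sub>R FF + t *\<^sub>R GG) y\<bar> / dM x y)"
      unfolding scaleR_fun_apply by (rule aux_scale[OF m])
    also have "\<dots> \<le> (1/m) * m"
      using main_slope[OF xy, of t] assms m unfolding m_def by (intro mult_left_mono) auto
    also have "\<dots> = 1" using m by simp
    finally show "\<bar>((1/m) *\<^sub>R (1 *\<^sub>R FF + t *\<^sub>R GG)) x - ((1/m) *\<^sub>R (1 *\<^sub>R FF + t *\<^sub>R GG)) y\<bar> / dM x y \<le> 1" .
  qed
qed

lemma K2_s: "0 < s \<Longrightarrow> \<not> lipnorm MM (LL (1, s)) \<le> 1"
  unfolding LL_Pair using main_lower by fastforce

lemma halfspace_ev:
  assumes K: "\<And>v. lipnorm MM (LL v) \<le> 1 \<Longrightarrow> inner a v \<le> c"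
  shows "eventually (\<lambda>s. inner a (1::real, s) \<le> c) (at_right (0::real))"
proof -
  obtain a1 a2 where a: "a = (a1, a2)" by (cases a)
  have h1: "a1 \<le> c" using K[OF K2_10] unfolding a by simp
  have h2: "a1 + a2 * t \<le> c * (1 + t^2/4)" if "0 < t" "t \<le> 1" for t
  proof -
    define m where "m = 1 + t^2/4"
    have m: "0 < m" unfolding m_def by (simp add: add_pos_nonneg)
    have "a1 * (1/m) + a2 * (t/m) \<le> c" using K[OF K2_t[OF that]] unfolding a m_def by simp
    then have "(a1 + a2 * t) / m \<le> c" by (simp add: add_divide_distrib)
    then show ?thesis using m unfolding m_def[symmetric] by (simp add: divide_le_eq mult.commute)
  qed
  have "\<exists>b>0. \<forall>y>0. y < b \<longrightarrow> a1 + a2 * y \<le> c"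
  proof (cases "a2 \<le> 0")
    case True
    show ?thesis
    proof (rule exI[of _ 1], intro conjI allI impI)
      fix y :: real assume "0 < y" "y < 1"
      then have "a2 * y \<le> 0" using True by (simp add: mult_nonpos_nonneg)
      then show "a1 + a2 * y \<le> c" using h1 by linarith
    qed simp
  next
    case False
    then have a2: "0 < a2" by simp
    show ?thesis
    proof (cases "a1 < c")
      case True
      show ?thesis
      proof (rule exI[of _ "(c - a1) / a2"], intro conjI allI impI)
        show "0 < (c - a1) / a2" using True a2 by simp
        fix y :: real assume "0 < y" "y < (c - a1) / a2"
        then have "a2 * y < c - a1" using a2 by (simp add: less_divide_eq mult.commute)
        then show "a1 + a2 * y \<le> c" by linarith
      qed
    next
      case False
      then have ac: "a1 = c" using h1 by simp
      have key: "a2 \<le> c * t / 4" if "0 < t" "t \<le> 1" for t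
      proof -
        have "a2 * t \<le> (c * t / 4) * t" using h2[OF that] ac by (simp add: power2_eq_square algebra_simps)
        then show ?thesis using that by simp
      qed
      show ?thesis
      proof (cases "c \<le> 0")
        case True
        have "a2 \<le> c * 1 / 4" using key[of 1] by simp
        then show ?thesis using True a2 by simp
      next
        case False
        define t where "t = min 1 (a2 / c)"
        have t: "0 < t" "t \<le> 1" "t \<le> a2 / c" unfolding t_def using a2 False by auto
        have "c * t \<le> a2" using t(3) False by (simp add: le_divide_eq mult.commute)
        then have "a2 \<le> a2 / 4" using key[OF t(1,2)] by simp
        then show ?thesis using a2 by simp
      qed
    qed
  qed
  then show ?thesis unfolding a eventually_at_right_field by simp
qed

theorem proposition2p7:
  shows "\<exists>B. finite B \<and> span B \<subseteq> YY \<and>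
           \<not> polytope {f \<in> span B. lipnorm MM f \<le> 1}"
proof (intro exI conjI)
  show "finite {FF, GG}" by simp
  show "span {FF, GG} \<subseteq> YY" unfolding span_FG LL_def using comb_YY by auto
  show "\<not> polytope {f \<in> span {FF, GG}. lipnorm MM f \<le> 1}"
  proof
    assume "polytope {f \<in> span {FF, GG}. lipnorm MM f \<le> 1}"
    then obtain P where P: "finite P" "{f \<in> span {FF, GG}. lipnorm MM f \<le> 1} = convex hull P"
      unfolding polytope_def by auto
    define K2 where "K2 = {v. lipnorm MM (LL v) \<le> 1}"
    have KK: "{f \<in> span {FF, GG}. lipnorm MM f \<le> 1} = LL ` K2"
      unfolding span_FG K2_def by auto
    have "P \<subseteq> convex hull P" by (rule hull_subset)
    then have "P \<subseteq> LL ` K2" using P(2) KK by simp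
    then have Pr: "P \<subseteq> range LL" by blast
    define P' where "P' = LL -` P"
    have fP': "finite P'" unfolding P'_def using P(1) LL_inj by (rule finite_vimageI)
    have "LL ` P' = P" unfolding P'_def using Pr by auto
    then have "LL ` (convex hull P') = convex hull P" using convex_hull_linear_image[OF LL_linear] by simp
    then have "LL ` K2 = LL ` (convex hull P')" using P(2) KK by simp
    then have "K2 = convex hull P'" using LL_inj by (simp add: inj_image_eq_iff)
    then have "polytope K2" unfolding polytope_def using fP' by auto
    then have "polyhedron K2" by (rule polytope_imp_polyhedron)
    then obtain F where F: "finite F" "K2 = \<Inter>F" "\<forall>h\<in>F. \<exists>a b. a \<noteq> 0 \<and> h = {x. inner a x \<le> b}"
      unfolding polyhedron_def by blast
    have "\<forall>h\<in>F. eventually (\<lambda>s. (1::real, s) \<in> h) (at_right (0::real))"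
    proof
      fix h assume hF: "h \<in> F"
      then obtain a b where h: "h = {x. inner a x \<le> b}" using F(3) by blast
      have "\<And>v. lipnorm MM (LL v) \<le> 1 \<Longrightarrow> inner a v \<le> b"
        using hF F(2) h unfolding K2_def by blast
      then have "eventually (\<lambda>s. inner a (1::real, s) \<le> b) (at_right (0::real))" by (rule halfspace_ev)
      then show "eventually (\<lambda>s. (1::real, s) \<in> h) (at_right (0::real))" unfolding h by simp
    qed
    then have "eventually (\<lambda>s. \<forall>h\<in>F. (1::real, s) \<in> h) (at_right (0::real))"
      by (rule eventually_ball_finite[OF F(1)])
    then obtain b :: real where b: "0 < b" "\<forall>y>0. y < b \<longrightarrow> (\<forall>h\<in>F. (1, y) \<in> h)"
      unfolding eventually_at_right_field by auto
    then have "(1, b/2) \<in> K2" unfolding F(2) by auto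
    then show False using K2_s[of "b/2"] b(1) unfolding K2_def by simp
  qed
qed

end
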